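(* Let $R$ be an integral domain and let $I, J$ be power stable ideals of $R[X]$ such that the ideals $I\cap R$ and $J\cap R$ of $R$ are comaximal. Then $I\cap J$ is power stable.
   Context: An ideal $I$ of the polynomial ring $R[X]$ over an integral domain $R$ is called power stable if $I^t\cap R = (I\cap R)^t$ for all integers $t\geq 1$. *)

theory Defs
  imports "HOL-Computational_Algebra.Polynomial"
begin

definition is_ideal :: "'a::comm_ring_1 set \<Rightarrow> bool" where
  "is_ideal I \<longleftrightarrow> 0 \<in> I \<and> (\<forall>x\<in>I. \<forall>y\<in>I. x + y \<in> I) \<and> (\<forall>r x. x \<in> I \<longrightarrow> r * x \<in> I)"

inductive_set ideal_prod :: "'a::comm_ring_1 set \<Rightarrow> 'a set \<Rightarrow> 'a set" for I J where
  prod: "i \<in> I \<Longrightarrow> j \<in> J \<Longrightarrow> i * j \<in> ideal_prod I J"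
| sum: "s1 \<in> ideal_prod I J \<Longrightarrow> s2 \<in> ideal_prod I J \<Longrightarrow> s1 + s2 \<in> ideal_prod I J"

primrec ideal_pow :: "'a::comm_ring_1 set \<Rightarrow> nat \<Rightarrow> 'a set" where
  "ideal_pow I 0 = UNIV"
| "ideal_pow I (Suc n) = ideal_prod I (ideal_pow I n)"

text \<open>Contraction \<open>I \<inter> R\<close> of an ideal of \<open>R[X]\<close>, identifying \<open>R\<close> with the constant polynomials.\<close>
definition contr :: "'a::comm_ring_1 poly set \<Rightarrow> 'a set" where
  "contr I = {a. [:a:] \<in> I}"

definition power_stable :: "'a::comm_ring_1 poly set \<Rightarrow> bool" where
  "power_stable I \<longleftrightarrow> (\<forall>t::nat. t \<ge> 1 \<longrightarrow> contr (ideal_pow I t) = ideal_pow (contr I) t)"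

definition comaximal :: "'a::comm_ring_1 set \<Rightarrow> 'a set \<Rightarrow> bool" where
  "comaximal A B \<longleftrightarrow> (\<exists>a\<in>A. \<exists>b\<in>B. a + b = 1)"

end

theory Submission
  imports Defs
begin

lemma ideal_prod_mono:
  assumes "I \<subseteq> I'" "J \<subseteq> J'" "x \<in> ideal_prod I J"
  shows "x \<in> ideal_prod I' J'"
  using assms(3) by induction (use assms(1,2) in \<open>auto intro: ideal_prod.intros\<close>)

lemma ideal_pow_mono:
  assumes "I \<subseteq> I'" shows "ideal_pow I t \<subseteq> ideal_pow I' t"
  by (induction t) (use assms ideal_prod_mono in auto)

lemma ideal_prod_mult:
  assumes "is_ideal I" "x \<in> ideal_prod I J"
  shows "r * x \<in> ideal_prod I J"
  using assms(2)
proof induction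
  case (prod i j)
  have "r * i \<in> I" using assms(1) prod(1) unfolding is_ideal_def by blast
  then have "(r * i) * j \<in> ideal_prod I J" using prod(2) by (rule ideal_prod.prod)
  then show ?case by (simp add: mult.assoc)
next
  case (sum s1 s2)
  then show ?case by (simp add: distrib_left ideal_prod.sum)
qed

lemma is_ideal_pow:
  assumes "is_ideal I" shows "is_ideal (ideal_pow I t)"
proof (induction t)
  case 0 then show ?case by (simp add: is_ideal_def)
next
  case (Suc t)
  have "0 * 0 \<in> ideal_prod I (ideal_pow I t)"
    using assms Suc unfolding is_ideal_def by (blast intro: ideal_prod.prod)
  then show ?case using ideal_prod_mult[OF assms]
    unfolding is_ideal_def by (auto intro: ideal_prod.sum)
qed

lemma key:
  assumes "is_ideal I" "is_ideal J" "i \<in> I" "y \<in> ideal_pow J t"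
  shows "i ^ t * y \<in> ideal_pow (I \<inter> J) t"
  using assms(4)
proof (induction t arbitrary: y)
  case 0 then show ?case by simp
next
  case (Suc t)
  from Suc.prems have "y \<in> ideal_prod J (ideal_pow J t)" by simp
  then show ?case
  proof induction
    case (prod a b)
    have "i * a \<in> I \<inter> J" using assms prod(1) unfolding is_ideal_def
      by (metis IntI mult.commute)
    moreover have "i ^ t * b \<in> ideal_pow (I \<inter> J) t" using Suc.IH prod(2) by blast
    ultimately have "(i * a) * (i ^ t * b) \<in> ideal_prod (I \<inter> J) (ideal_pow (I \<inter> J) t)"
      by (rule ideal_prod.prod)
    moreover have "(i * a) * (i ^ t * b) = i ^ Suc t * (a * b)" by (simp add: ac_simps)
    ultimately show ?case by simp
  next
    case (sum s1 s2)
    then show ?case by (simp add: distrib_left ideal_prod.sum)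
  qed
qed

definition comax :: "'a::comm_ring_1 \<Rightarrow> 'a \<Rightarrow> bool" where
  "comax x y \<longleftrightarrow> (\<exists>u v. x * u + y * v = 1)"

lemma comax_sym: "comax x y \<Longrightarrow> comax y x"
  unfolding comax_def by (auto simp: add.commute)

lemma comax_mult: "comax x y \<Longrightarrow> comax x z \<Longrightarrow> comax x (y * z)"
proof -
  assume "comax x y" "comax x z"
  then obtain u v u' v' where h: "x * u + y * v = 1" "x * u' + z * v' = 1"
    unfolding comax_def by blast
  have "x * (u * (x * u' + z * v') + y * v * u') + (y * z) * (v * v') =
        (x * u + y * v) * (x * u' + z * v')"
    by (simp add: algebra_simps)
  also have "\<dots> = 1" using h by simp
  finally show ?thesis unfolding comax_def by blast
qed

lemma comax_pow: "comax x y \<Longrightarrow> comax x (y ^ n)"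
proof (induction n)
  case 0
  have "x * 0 + y ^ 0 * 1 = 1" by simp
  then show ?case unfolding comax_def by blast
next
  case (Suc n)
  then show ?case using comax_mult[of x y "y ^ n"] by simp
qed

lemma pow_inter:
  fixes I J :: "'a::comm_ring_1 set"
  assumes "is_ideal I" "is_ideal J" "i \<in> I" "j \<in> J" "i + j = 1"
  shows "ideal_pow (I \<inter> J) t = ideal_pow I t \<inter> ideal_pow J t"
proof
  show "ideal_pow (I \<inter> J) t \<subseteq> ideal_pow I t \<inter> ideal_pow J t"
    using ideal_pow_mono[of "I \<inter> J" I t] ideal_pow_mono[of "I \<inter> J" J t] by auto
next
  show "ideal_pow I t \<inter> ideal_pow J t \<subseteq> ideal_pow (I \<inter> J) t"
  proof
    fix x assume x: "x \<in> ideal_pow I t \<inter> ideal_pow J t"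
    have "comax i j" using assms(5) unfolding comax_def by (metis mult_1_right)
    then have "comax (i ^ t) (j ^ t)"
      using comax_pow comax_sym by blast
    then obtain u v where uv: "i ^ t * u + j ^ t * v = 1" unfolding comax_def by blast
    have a: "i ^ t * x \<in> ideal_pow (I \<inter> J) t" using key[OF assms(1,2,3)] x by blast
    have b: "j ^ t * x \<in> ideal_pow (J \<inter> I) t" using key[OF assms(2,1,4)] x by blast
    hence b: "j ^ t * x \<in> ideal_pow (I \<inter> J) t" by (simp add: Int_commute)
    have id: "is_ideal (ideal_pow (I \<inter> J) t)"
    proof (rule is_ideal_pow)
      show "is_ideal (I \<inter> J)" using assms(1,2) unfolding is_ideal_def by simp
    qed
    have "u * (i ^ t * x) + v * (j ^ t * x) = (i ^ t * u + j ^ t * v) * x"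
      by (simp add: algebra_simps)
    hence "x = u * (i ^ t * x) + v * (j ^ t * x)" using uv by simp
    also have "\<dots> \<in> ideal_pow (I \<inter> J) t"
    proof -
      have "u * (i ^ t * x) \<in> ideal_pow (I \<inter> J) t" "v * (j ^ t * x) \<in> ideal_pow (I \<inter> J) t"
        using id a b unfolding is_ideal_def by blast+
      then show ?thesis using id unfolding is_ideal_def by blast
    qed
    finally show "x \<in> ideal_pow (I \<inter> J) t" .
  qed
qed

lemma contr_ideal:
  assumes h: "is_ideal I" shows "is_ideal (contr I)"
  unfolding is_ideal_def contr_def
proof (intro conjI ballI allI impI; simp only: mem_Collect_eq)
  show "[:0:] \<in> I" using h unfolding is_ideal_def by simp
next
  fix x y assume "[:x:] \<in> I" "[:y:] \<in> I"
  then have "[:x:] + [:y:] \<in> I" using h unfolding is_ideal_def by blast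
  moreover have "[:x:] + [:y:] = [:x + y:]" by simp
  ultimately show "[:x + y:] \<in> I" by simp
next
  fix r x assume "[:x:] \<in> I"
  then have "[:r:] * [:x:] \<in> I" using h unfolding is_ideal_def by blast
  moreover have "[:r:] * [:x:] = [:r * x:]" by simp
  ultimately show "[:r * x:] \<in> I" by (simp add: mult.commute)
qed

theorem lemma3p1:
  fixes I J :: "'a::idom poly set"
  assumes "is_ideal I" and "is_ideal J"
    and "power_stable I" and "power_stable J"
    and "comaximal (contr I) (contr J)"
  shows "power_stable (I \<inter> J)"
proof -
  obtain a b where ab: "a \<in> contr I" "b \<in> contr J" "a + b = 1"
    using assms(5) unfolding comaximal_def by blast
  have pab: "[:a:] \<in> I" "[:b:] \<in> J" "[:a:] + [:b:] = 1"
    using ab by (auto simp: contr_def one_pCons)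
  have cI: "contr (I \<inter> J) = contr I \<inter> contr J" by (auto simp: contr_def)
  show ?thesis unfolding power_stable_def
  proof (intro allI impI)
    fix t :: nat assume t: "t \<ge> 1"
    have "contr (ideal_pow (I \<inter> J) t) = contr (ideal_pow I t \<inter> ideal_pow J t)"
      using pow_inter[OF assms(1,2) pab] by simp
    also have "\<dots> = contr (ideal_pow I t) \<inter> contr (ideal_pow J t)" by (auto simp: contr_def)
    also have "\<dots> = ideal_pow (contr I) t \<inter> ideal_pow (contr J) t"
      using assms(3,4) t unfolding power_stable_def by simp
    also have "\<dots> = ideal_pow (contr I \<inter> contr J) t"
      using pow_inter[OF contr_ideal[OF assms(1)] contr_ideal[OF assms(2)] ab] by simp
    finally show "contr (ideal_pow (I \<inter> J) t) = ideal_pow (contr (I \<inter> J)) t" using cI by simp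
  qed
qed

end
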